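(* Let $m,n,s,k$ be integers such that $2\leqslant s\leqslant n$, $2\leqslant k\leqslant m$ and $ms=nk$. Let $c\geqslant 1$, let $\Gamma$ be an abelian group of order $nkc$, and let $d=\gcd(s,k)$. If there exists an $\mathrm{MRS}_\Gamma(k/d,\, s;\, mdc/k)$, then there exists an $\mathrm{MRS}_\Gamma(m,n;s,k;c)$.
   Context: For an abelian group $\Gamma$ of order $abc$, an $\mathrm{MRS}_\Gamma(a,b;c)$ is a collection of $c$ (completely filled) arrays of size $a\times b$ whose entries are the elements of $\Gamma$, each appearing exactly once and in a unique array, such that there are $\omega,\delta\in\Gamma$ with every row sum equal to $\omega$ and every column sum equal to $\delta$. For positive integers $m,n,s,k,c$ and an abelian group $\Gamma$ of order $nkc$, an $\mathrm{MRS}_\Gamma(m,n;s,k;c)$ is a set of $c$ partially filled $m\times n$ arrays (some cells may be empty) with entries in $\Gamma$ such that: every element of $\Gamma$ appears exactly once and in a unique array; in every array each row contains exactly $s$ filled cells and each column contains exactly $k$ filled cells; and there exist $\omega,\delta\in\Gamma$ such that in every array each row sum is $\omega$ and each column sum is $\delta$. *)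

theory Defs
  imports Main
begin

text \<open>The abelian group Gamma is the (finite) type 'a of class ab_group_add.
  Arrays are indexed by t < c (array index), i (row), j (column), all from 0.\<close>

definition exists_MRS_full :: "'a::{ab_group_add,finite} itself \<Rightarrow> nat \<Rightarrow> nat \<Rightarrow> nat \<Rightarrow> bool"
  where "exists_MRS_full _ a b c \<longleftrightarrow>
    (\<exists>A :: nat \<Rightarrow> nat \<Rightarrow> nat \<Rightarrow> 'a.
      bij_betw (\<lambda>(t,i,j). A t i j) ({..<c} \<times> {..<a} \<times> {..<b}) UNIV \<and>
      (\<exists>\<omega> \<delta>. (\<forall>t<c. \<forall>i<a. (\<Sum>j<b. A t i j) = \<omega>) \<and>
               (\<forall>t<c. \<forall>j<b. (\<Sum>i<a. A t i j) = \<delta>)))"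

text \<open>MRS_Gamma(m,n;s,k;c): c partially filled m x n arrays; None = empty cell.\<close>
definition exists_MRS_partial :: "'a::{ab_group_add,finite} itself \<Rightarrow> nat \<Rightarrow> nat \<Rightarrow> nat \<Rightarrow> nat \<Rightarrow> nat \<Rightarrow> bool"
  where "exists_MRS_partial _ m n s k c \<longleftrightarrow>
    (\<exists>A :: nat \<Rightarrow> nat \<Rightarrow> nat \<Rightarrow> 'a option.
      bij_betw (\<lambda>(t,i,j). the (A t i j))
        {(t,i,j). t < c \<and> i < m \<and> j < n \<and> A t i j \<noteq> None} UNIV \<and>
      (\<forall>t<c. \<forall>i<m. card {j. j < n \<and> A t i j \<noteq> None} = s) \<and>
      (\<forall>t<c. \<forall>j<n. card {i. i < m \<and> A t i j \<noteq> None} = k) \<and>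
      (\<exists>\<omega> \<delta>. (\<forall>t<c. \<forall>i<m. (\<Sum>j\<in>{j. j < n \<and> A t i j \<noteq> None}. the (A t i j)) = \<omega>) \<and>
               (\<forall>t<c. \<forall>j<n. (\<Sum>i\<in>{i. i < m \<and> A t i j \<noteq> None}. the (A t i j)) = \<delta>)))"

end

theory Submission imports Defs begin
definition off :: "nat \<Rightarrow> nat \<Rightarrow> nat \<Rightarrow> nat \<Rightarrow> nat" where
  "off n s p j = nat ((int j - int (p*s)) mod int n)"

lemma off_lt: "0 < n \<Longrightarrow> off n s p j < n"
  unfolding off_def by (simp add: nat_less_iff)

lemma off_L1: assumes "0 < n" "jj < n" shows "off n s p ((p*s+jj) mod n) = jj"
proof -
  have "(int ((p*s+jj) mod n) - int (p*s)) mod int n = (int (p*s) + int jj - int (p*s)) mod int n"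
    by (simp add: of_nat_mod mod_diff_left_eq)
  also have "\<dots> = int jj" using assms by simp
  finally show ?thesis unfolding off_def by simp
qed

lemma off_L2: assumes "0 < n" "j < n" shows "(p*s + off n s p j) mod n = j"
proof -
  have "int ((p*s + off n s p j) mod n) = (int (p*s) + (int j - int (p*s)) mod int n) mod int n"
    unfolding off_def using assms by (simp add: of_nat_mod)
  also have "\<dots> = (int (p*s) + (int j - int (p*s))) mod int n"
    by (simp add: mod_add_right_eq)
  also have "\<dots> = int j" using assms by simp
  finally show ?thesis by linarith
qed

lemma core:
  fixes F :: "nat \<Rightarrow> nat \<Rightarrow> nat \<Rightarrow> 'a::{ab_group_add,finite}"
    and G :: "'a itself"
  assumes s0: "0 < s" and n0: "0 < n" and sn: "s \<le> n" and a0: "0 < a" and q0: "0 < q"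
    and mq: "m = a*q" and qs: "q*s = n*d" and ka: "k = a*d"
    and bij: "bij_betw (\<lambda>(t,i,j). F t i j) ({..<q*c}\<times>{..<a}\<times>{..<s}) UNIV"
    and rows: "\<forall>T<q*c. \<forall>r<a. (\<Sum>j<s. F T r j) = \<omega>"
    and cols: "\<forall>T<q*c. \<forall>j<s. (\<Sum>r<a. F T r j) = \<delta>"
  shows "exists_MRS_partial G m n s k c"
proof -
  define A where "A t i j = (if off n s (i div a) j < s
     then Some (F (t*q + i div a) (i mod a) (off n s (i div a) j)) else None)" for t i j
  define S where "S = {(t,i,j). t < c \<and> i < m \<and> j < n \<and> A t i j \<noteq> None}"
  define D where "D = {..<q*c}\<times>{..<a}\<times>{..<s}"
  define \<phi> where "\<phi> = (\<lambda>(t,i,j). (t*q + i div a, i mod a, off n s (i div a) j))"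
  define \<psi> where "\<psi> = (\<lambda>(T,r,jj). (T div q, (T mod q)*a + r, ((T mod q)*s + jj) mod n))"
  have idiv: "i div a < q" if "i < m" for i
    using that mq a0 by (simp add: less_mult_imp_div_less mult.commute)
  have bphi: "bij_betw \<phi> S D"
  proof (rule bij_betw_byWitness[where f'=\<psi>])
    show "\<forall>x\<in>S. \<psi> (\<phi> x) = x"
    proof
      fix x assume "x \<in> S"
      then obtain t i j where x: "x = (t,i,j)" "t < c" "i < m" "j < n" by (auto simp: S_def)
      have "i div a < q" using idiv x by simp
      then have e1: "(t*q + i div a) div q = t" "(t*q + i div a) mod q = i div a" by auto
      have e2: "(i div a)*a + i mod a = i" by simp
      have e3: "((i div a) * s + off n s (i div a) j) mod n = j" using off_L2[OF n0 x(4)] .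
      show "\<psi> (\<phi> x) = x" unfolding x \<phi>_def \<psi>_def using e1 e2 e3
        by (simp only: prod.case)
    qed
    show "\<forall>y\<in>D. \<phi> (\<psi> y) = y"
    proof
      fix y assume "y \<in> D"
      then obtain T r jj where y: "y = (T,r,jj)" "T < q*c" "r < a" "jj < s" by (auto simp: D_def)
      have "jj < n" using y sn by simp
      have e1: "((T mod q)*a + r) div a = T mod q" "((T mod q)*a + r) mod a = r"
        using y a0 by auto
      have e2: "(T div q)*q + T mod q = T" by simp
      have e3: "off n s (T mod q) (((T mod q)*s + jj) mod n) = jj"
        using off_L1[OF n0 \<open>jj < n\<close>] .
      show "\<phi> (\<psi> y) = y" unfolding y \<phi>_def \<psi>_def prod.case e1 e2 e3 by (rule refl)
    qed
    show "\<phi> ` S \<subseteq> D"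
    proof
      fix y assume "y \<in> \<phi> ` S"
      then obtain t i j where x: "y = \<phi> (t,i,j)" "t < c" "i < m" "j < n" "A t i j \<noteq> None"
        by (auto simp: S_def)
      have "i div a < q" using idiv x by simp
      then have "t*q + i div a < t*q + q" by simp
      also have "\<dots> = (t+1)*q" by simp
      also have "\<dots> \<le> c*q" using x(2) by (intro mult_right_mono) auto
      finally have "t*q + i div a < q*c" by (simp add: mult.commute)
      moreover have "off n s (i div a) j < s" using x(5) by (auto simp: A_def split: if_splits)
      ultimately show "y \<in> D" using x a0 by (simp add: D_def \<phi>_def)
    qed
    show "\<psi> ` D \<subseteq> S"
    proof
      fix x assume "x \<in> \<psi> ` D"
      then obtain T r jj where y: "x = \<psi> (T,r,jj)" "T < q*c" "r < a" "jj < s" by (auto simp: D_def)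
      have "jj < n" using y sn by simp
      have "T div q < c" using y(2) by (simp add: less_mult_imp_div_less mult.commute)
      moreover have "(T mod q)*a + r < m"
      proof -
        have "T mod q + 1 \<le> q" using q0 by (simp add: Suc_leI)
        then have "(T mod q + 1)*a \<le> q*a" by (rule mult_right_mono) simp
        then show ?thesis using y(3) mq by (simp add: algebra_simps)
      qed
      moreover have "((T mod q)*a + r) div a = T mod q" "((T mod q)*a + r) mod a = r"
        using y a0 by auto
      moreover have "off n s (T mod q) (((T mod q)*s + jj) mod n) = jj"
        using off_L1[OF n0 \<open>jj < n\<close>] .
      moreover have "((T mod q)*s + jj) mod n < n" using n0 by simp
      ultimately show "x \<in> S" using y(1,4)
        unfolding S_def \<psi>_def A_def by simp
    qed
  qed
  have rowbij: "bij_betw (off n s p) {j. j < n \<and> off n s p j < s} {..<s}" for p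
  proof (rule bij_betw_byWitness[where f'="\<lambda>jj. (p*s+jj) mod n"])
    show "\<forall>x\<in>{j. j < n \<and> off n s p j < s}. (p * s + off n s p x) mod n = x"
      using off_L2[OF n0] by auto
    show "\<forall>y\<in>{..<s}. off n s p ((p * s + y) mod n) = y"
      using off_L1[OF n0] sn by auto
    show "off n s p ` {j. j < n \<and> off n s p j < s} \<subseteq> {..<s}" by auto
    show "(\<lambda>jj. (p * s + jj) mod n) ` {..<s} \<subseteq> {j. j < n \<and> off n s p j < s}"
      using off_L1[OF n0] sn n0 by auto
  qed
  have Rset: "{j. j < n \<and> A t i j \<noteq> None} = {j. j < n \<and> off n s (i div a) j < s}" for t i
    by (auto simp: A_def)
  have Cset: "{i. i < m \<and> A t i j \<noteq> None} = {i. i < m \<and> off n s (i div a) j < s}" for t j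
    by (auto simp: A_def)
  have offx: "off n s ((j+n*l) div s) j = (j+n*l) mod s" if jn: "j < n" for j l
  proof -
    define x where "x = j + n*l"
    have xm: "x mod n = j" using jn by (simp add: x_def)
    have "x mod s < n" using sn s0 by (meson less_le_trans mod_less_divisor)
    then have "off n s (x div s) ((x div s * s + x mod s) mod n) = x mod s"
      using off_L1[OF n0] by blast
    then show ?thesis using xm by (simp add: x_def)
  qed
  have xdiv: "(j+n*l) div s < q" if jn: "j < n" and "l < d" for j l
  proof -
    have "j + n*l < n * (l+1)" using jn by simp
    also have "\<dots> \<le> n*d" using that(2) by (intro mult_left_mono) auto
    finally have "j + n*l < q*s" using qs by simp
    then show ?thesis by (simp add: less_mult_imp_div_less)
  qed
  define \<chi> where "\<chi> j i = ((i div a * s + off n s (i div a) j) div n, i mod a)" for j i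
  define \<rho> where "\<rho> j = (\<lambda>(l,r). ((j + n*l) div s)*a + r)" for j
  have colbij: "bij_betw (\<chi> j) {i. i < m \<and> off n s (i div a) j < s} ({..<d}\<times>{..<a}) \<and>
                bij_betw (\<rho> j) ({..<d}\<times>{..<a}) {i. i < m \<and> off n s (i div a) j < s}"
    if jn: "j < n" for j
  proof -
    have f1: "\<forall>x\<in>{i. i < m \<and> off n s (i div a) j < s}. \<rho> j (\<chi> j x) = x"
    proof
      fix i assume "i \<in> {i. i < m \<and> off n s (i div a) j < s}"
      then have i: "i < m" "off n s (i div a) j < s" by auto
      define x where "x = i div a * s + off n s (i div a) j"
      have "x mod n = j" unfolding x_def using off_L2[OF n0 jn] .
      then have "j + n*(x div n) = x" by (metis mod_mult_div_eq add.commute)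
      moreover have "x div s = i div a" unfolding x_def using i(2) by simp
      ultimately show "\<rho> j (\<chi> j i) = i" by (simp add: \<rho>_def \<chi>_def x_def[symmetric])
    qed
    have f2: "\<forall>y\<in>{..<d}\<times>{..<a}. \<chi> j (\<rho> j y) = y"
    proof
      fix y assume "y \<in> {..<d}\<times>{..<a}"
      then obtain l r where y: "y = (l,r)" "l < d" "r < a" by auto
      define x where "x = j + n*l"
      define i where "i = (x div s)*a + r"
      have id: "i div a = x div s" "i mod a = r" using y a0 by (auto simp: i_def)
      have o: "off n s (x div s) j = x mod s" using offx[OF jn] by (simp add: x_def)
      have "(x div s * s + x mod s) div n = l" using jn by (simp add: x_def)
      then show "\<chi> j (\<rho> j y) = y"
        by (simp add: \<rho>_def \<chi>_def y i_def[symmetric] id o x_def[symmetric])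
    qed
    have f3: "\<chi> j ` {i. i < m \<and> off n s (i div a) j < s} \<subseteq> {..<d}\<times>{..<a}"
    proof
      fix y assume "y \<in> \<chi> j ` {i. i < m \<and> off n s (i div a) j < s}"
      then obtain i where i: "y = \<chi> j i" "i < m" "off n s (i div a) j < s" by auto
      have "i div a < q" using idiv i by simp
      then have "i div a * s + s \<le> q * s"
        by (metis Suc_leI mult_Suc mult_le_mono1 add.commute)
      then have "i div a * s + off n s (i div a) j < n*d" using i(3) qs by linarith
      then have "(i div a * s + off n s (i div a) j) div n < d"
        by (simp add: less_mult_imp_div_less mult.commute)
      then show "y \<in> {..<d}\<times>{..<a}" using i a0 by (simp add: \<chi>_def)
    qed
    have f4: "\<rho> j ` ({..<d}\<times>{..<a}) \<subseteq> {i. i < m \<and> off n s (i div a) j < s}"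
    proof
      fix z assume "z \<in> \<rho> j ` ({..<d}\<times>{..<a})"
      then obtain l r where y: "z = \<rho> j (l,r)" "l < d" "r < a" by auto
      define x where "x = j + n*l"
      define i where "i = (x div s)*a + r"
      have id: "i div a = x div s" "i mod a = r" using y a0 by (auto simp: i_def)
      have o: "off n s (x div s) j = x mod s" using offx[OF jn] by (simp add: x_def)
      have "x div s < q" using xdiv[OF jn y(2)] by (simp add: x_def)
      then have "x div s + 1 \<le> q" by simp
      then have "(x div s + 1)*a \<le> q*a" by (rule mult_right_mono) simp
      then have "i < m" using y(3) mq by (simp add: i_def algebra_simps)
      then show "z \<in> {i. i < m \<and> off n s (i div a) j < s}"
        using o s0 id by (simp add: y(1) \<rho>_def x_def[symmetric] i_def[symmetric])
    qed
    show ?thesis using f1 f2 f3 f4 by (auto intro: bij_betw_byWitness)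
  qed
  have Tlt: "t*q + p < q*c" if "t < c" "p < q" for t p
  proof -
    have "t*q + p < t*q + q" using that by simp
    also have "\<dots> = (t+1)*q" by simp
    also have "\<dots> \<le> c*q" using that(1) by (intro mult_right_mono) auto
    finally show ?thesis by (simp add: mult.commute)
  qed
  have h1: "bij_betw (\<lambda>(t,i,j). the (A t i j))
        {(t,i,j). t < c \<and> i < m \<and> j < n \<and> A t i j \<noteq> None} UNIV"
  proof -
    have b1: "bij_betw ((\<lambda>(t,i,j). F t i j) \<circ> \<phi>) S UNIV"
      using bij_betw_trans[OF bphi] bij by (simp add: D_def)
    have "\<forall>x\<in>S. ((\<lambda>(t,i,j). F t i j) \<circ> \<phi>) x = (\<lambda>(t,i,j). the (A t i j)) x"
    proof
      fix x assume "x \<in> S"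
      then obtain t i j where x: "x = (t,i,j)" "A t i j \<noteq> None" by (auto simp: S_def)
      then have "off n s (i div a) j < s" by (auto simp: A_def split: if_splits)
      then show "((\<lambda>(t,i,j). F t i j) \<circ> \<phi>) x = (\<lambda>(t,i,j). the (A t i j)) x"
        by (simp add: x(1) A_def \<phi>_def)
    qed
    note eq = this
    have "bij_betw ((\<lambda>(t,i,j). F t i j) \<circ> \<phi>) S UNIV = bij_betw (\<lambda>(t,i,j). the (A t i j)) S UNIV"
      apply (rule bij_betw_cong) using eq by (rule bspec)
    with b1 have "bij_betw (\<lambda>(t,i,j). the (A t i j)) S UNIV" by simp
    then show ?thesis by (simp add: S_def)
  qed
  have h2: "\<forall>t<c. \<forall>i<m. card {j. j < n \<and> A t i j \<noteq> None} = s"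
  proof (intro allI impI)
    fix t i assume "t < c" "i < m"
    show "card {j. j < n \<and> A t i j \<noteq> None} = s"
      unfolding Rset using bij_betw_same_card[OF rowbij] by simp
  qed
  have h3: "\<forall>t<c. \<forall>j<n. card {i. i < m \<and> A t i j \<noteq> None} = k"
  proof (intro allI impI)
    fix t j assume "t < c" "j < n"
    show "card {i. i < m \<and> A t i j \<noteq> None} = k"
      unfolding Cset using bij_betw_same_card[OF conjunct1[OF colbij[OF \<open>j < n\<close>]]] ka
      by (simp add: card_cartesian_product)
  qed
  have h4: "\<forall>t<c. \<forall>i<m. (\<Sum>j\<in>{j. j < n \<and> A t i j \<noteq> None}. the (A t i j)) = \<omega>"
  proof (intro allI impI)
    fix t i assume t: "t < c" and i: "i < m"
    define p where "p = i div a"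
    have "p < q" using idiv i by (simp add: p_def)
    have "(\<Sum>j\<in>{j. j < n \<and> A t i j \<noteq> None}. the (A t i j))
        = (\<Sum>j\<in>{j. j < n \<and> off n s p j < s}. F (t*q + p) (i mod a) (off n s p j))"
      unfolding Rset p_def by (rule sum.cong) (auto simp: A_def)
    also have "\<dots> = (\<Sum>jj<s. F (t*q + p) (i mod a) jj)"
      by (rule sum.reindex_bij_betw[OF rowbij])
    also have "\<dots> = \<omega>" using rows Tlt[OF t \<open>p < q\<close>] a0 by simp
    finally show "(\<Sum>j\<in>{j. j < n \<and> A t i j \<noteq> None}. the (A t i j)) = \<omega>" .
  qed
  have h5: "\<forall>t<c. \<forall>j<n. (\<Sum>i\<in>{i. i < m \<and> A t i j \<noteq> None}. the (A t i j)) = (\<Sum>l<d. \<delta>)"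
  proof (intro allI impI)
    fix t j assume t: "t < c" and j: "j < n"
    have "(\<Sum>i\<in>{i. i < m \<and> A t i j \<noteq> None}. the (A t i j))
        = (\<Sum>y\<in>{..<d}\<times>{..<a}. the (A t (\<rho> j y) j))"
      unfolding Cset by (rule sum.reindex_bij_betw[OF conjunct2[OF colbij[OF j]], symmetric])
    also have "\<dots> = (\<Sum>y\<in>{..<d}\<times>{..<a}. (\<lambda>(l,r). F (t*q + (j+n*l) div s) r ((j+n*l) mod s)) y)"
    proof (rule sum.cong)
      fix y assume "y \<in> {..<d}\<times>{..<a}"
      then obtain l r where y: "y = (l,r)" "l < d" "r < a" by auto
      have id: "(((j+n*l) div s)*a + r) div a = (j+n*l) div s" "(((j+n*l) div s)*a + r) mod a = r"
        using y a0 by auto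
      show "the (A t (\<rho> j y) j) = (\<lambda>(l,r). F (t*q + (j+n*l) div s) r ((j+n*l) mod s)) y"
        using offx[OF j, of l] s0 y(3) by (simp add: y(1) \<rho>_def A_def id)
    qed simp
    also have "\<dots> = (\<Sum>l<d. \<Sum>r<a. F (t*q + (j+n*l) div s) r ((j+n*l) mod s))"
      by (simp add: sum.cartesian_product)
    also have "\<dots> = (\<Sum>l<d. \<delta>)"
    proof (rule sum.cong)
      fix l assume "l \<in> {..<d}"
      then have "(j+n*l) div s < q" using xdiv[OF j] by simp
      then show "(\<Sum>r<a. F (t*q + (j+n*l) div s) r ((j+n*l) mod s)) = \<delta>"
        using cols Tlt[OF t] s0 by simp
    qed simp
    finally show "(\<Sum>i\<in>{i. i < m \<and> A t i j \<noteq> None}. the (A t i j)) = (\<Sum>l<d. \<delta>)" .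
  qed
  show ?thesis
    unfolding exists_MRS_partial_def
    apply (rule exI[where x=A])
    apply (intro conjI)
       apply (rule h1)
      apply (rule h2)
     apply (rule h3)
    apply (rule exI[where x=\<omega>], rule exI[where x="\<Sum>l<d. \<delta>"], rule conjI[OF h4 h5])
    done
qed

theorem lemma5p11:
  fixes m n s k c :: nat
    and G :: "'a::{ab_group_add,finite} itself"
  assumes "2 \<le> s" and "s \<le> n" and "2 \<le> k" and "k \<le> m" and "m * s = n * k"
    and "1 \<le> c"
    and "card (UNIV :: 'a set) = n * k * c"
    and "exists_MRS_full G (k div gcd s k) s (m * gcd s k * c div k)"
  shows "exists_MRS_partial G m n s k c"
proof -
  define d where "d = gcd s k"
  define a where "a = k div d"
  define s' where "s' = s div d"
  have d0: "0 < d" using assms(1) by (simp add: d_def)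
  have ka: "k = a*d" by (simp add: a_def d_def)
  have ss: "s = s'*d" by (simp add: s'_def d_def)
  have a0: "0 < a" using ka assms(3) by (metis gr0I mult_eq_0_iff not_numeral_le_zero)
  have cop: "coprime a s'" unfolding a_def s'_def d_def
    using div_gcd_coprime[of s k] assms(1) by (simp add: coprime_commute)
  have "m*s'*d = n*a*d" using assms(5) ka ss by (simp add: ac_simps)
  then have ms: "m*s' = n*a" using d0 by simp
  then have "a dvd m*s'" by simp
  then have "a dvd m" using cop by (simp add: coprime_dvd_mult_left_iff)
  then obtain q where mq: "m = a*q" by (auto elim: dvdE)
  have "a*(q*s') = a*n" using ms mq by (simp add: ac_simps)
  then have nq: "n = q*s'" using a0 by simp
  have qs: "q*s = n*d" using nq ss by simp
  have q0: "0 < q" using mq assms(3,4) by (metis gr0I mult_0_right not_numeral_le_zero le_0_eq)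
  have n0: "0 < n" using assms(1,2) by simp
  have s0: "0 < s" using assms(1) by simp
  have C: "m * d * c div k = q*c"
  proof -
    have "m * d * c = (q*c)*k" unfolding mq ka by (simp add: ac_simps)
    then show ?thesis using assms(3) by (simp only:) simp
  qed
  obtain F :: "nat \<Rightarrow> nat \<Rightarrow> nat \<Rightarrow> 'a" and \<omega> \<delta> where bij: "bij_betw (\<lambda>(t,i,j). F t i j) ({..<q*c}\<times>{..<a}\<times>{..<s}) UNIV"
    and rows: "\<forall>t<q*c. \<forall>i<a. (\<Sum>j<s. F t i j) = \<omega>"
    and cols: "\<forall>t<q*c. \<forall>j<s. (\<Sum>i<a. F t i j) = \<delta>"
    using assms(8) unfolding exists_MRS_full_def d_def[symmetric] a_def[symmetric] C by blast
  show ?thesis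
    by (rule core[OF s0 n0 assms(2) a0 q0 mq qs ka bij rows cols])
qed

end
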